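(* Let $G$ and $N$ be finitely presented groups, $Q$ a finite group, and $H$ an $N$ by $Q$ extension with transversal map $s:Q\to H$. The following are equivalent: (1) there is a surjective homomorphism $G\to H$; (2) there are homomorphisms $\tau:G\to Q$ and $\kappa:G\to H$ such that (a) $\tau$ is surjective, (b) for all $g\in G$, if $\kappa(g)=n\,s(q)$ with $n\in N$, $q\in Q$, then $q=\tau(g)$, and (c) for every $n\in N$ there exists $g\in\ker(\tau)$ with $\kappa(g)=n\,s(1_Q)$.
   Context: $H$ is an $N$ by $Q$ extension if $N$ is a normal subgroup of $H$ with $H/N\cong Q$; write $\pi_Q:H\to Q$ for the resulting epimorphism. A transversal map is a map $s:Q\to H$ with $\pi_Q(s(q))=q$ for all $q$ (so its image meets each coset of $N$ exactly once), chosen with $s(1_Q)=1_H$; every element of $H$ is uniquely $n\,s(q)$ with $n\in N$, $q\in Q$. *)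

theory Defs
  imports "HOL-Algebra.Algebra"
begin

text \<open>Words over a generating set: a letter (x, True) stands for x, (x, False) for its inverse.\<close>

fun word_eval :: "('a, 'b) monoid_scheme \<Rightarrow> ('a \<times> bool) list \<Rightarrow> 'a" where
  "word_eval G [] = \<one>\<^bsub>G\<^esub>"
| "word_eval G ((x, b) # w) =
     (if b then x else inv\<^bsub>G\<^esub> x) \<otimes>\<^bsub>G\<^esub> word_eval G w"

text \<open>The congruence on words generated by free cancellation and by the relators R;
  \<open>pres_eq R u v\<close> means u and v represent the same element of the group with
  presentation by generators and relators R.\<close>

inductive pres_eq :: "('a \<times> bool) list set \<Rightarrow> ('a \<times> bool) list \<Rightarrow> ('a \<times> bool) list \<Rightarrow> bool"
  for R where
  pres_refl: "pres_eq R w w"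
| pres_sym: "pres_eq R u v \<Longrightarrow> pres_eq R v u"
| pres_trans: "pres_eq R u v \<Longrightarrow> pres_eq R v w \<Longrightarrow> pres_eq R u w"
| pres_cancel: "pres_eq R (u @ [(x, b), (x, \<not> b)] @ v) (u @ v)"
| pres_rel: "r \<in> R \<Longrightarrow> pres_eq R (u @ r @ v) (u @ v)"

text \<open>G is finitely presented: there is a finite generating set X of G and a finite
  set R of relator words over X such that a word over X is trivial in G exactly when
  it is trivial in the presented group \<open>\<langle>X | R\<rangle>\<close>, i.e. G is isomorphic to \<open>\<langle>X | R\<rangle>\<close>.\<close>

definition finitely_presented :: "('a, 'b) monoid_scheme \<Rightarrow> bool" where
  "finitely_presented G \<longleftrightarrow> group G \<and>
     (\<exists>Gens Rels. finite Gens \<and> Gens \<subseteq> carrier G \<and> generate G Gens = carrier G \<and>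
            finite Rels \<and> (\<forall>r\<in>Rels. fst ` set r \<subseteq> Gens) \<and>
            (\<forall>w. fst ` set w \<subseteq> Gens \<longrightarrow> (word_eval G w = \<one>\<^bsub>G\<^esub> \<longleftrightarrow> pres_eq Rels w [])))"

end

theory Submission
  imports Defs
begin

theorem lemma2p5:
  fixes G :: "('a, 'm) monoid_scheme" and H :: "('b, 'n) monoid_scheme"
    and Q :: "('c, 'o) monoid_scheme"
    and N :: "'b set" and \<pi> :: "'b \<Rightarrow> 'c" and s :: "'c \<Rightarrow> 'b"
  assumes G_fp: "finitely_presented G"
    and H_grp: "group H" and Q_grp: "group Q" and Q_fin: "finite (carrier Q)"
    and N_normal: "N \<lhd> H"
    and N_fp: "finitely_presented (H\<lparr>carrier := N\<rparr>)"
    and \<pi>_hom: "\<pi> \<in> hom H Q" and \<pi>_surj: "\<pi> ` carrier H = carrier Q"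
    and \<pi>_ker: "kernel H Q \<pi> = N"
    and s_map: "s \<in> carrier Q \<rightarrow> carrier H"
    and s_sec: "\<And>q. q \<in> carrier Q \<Longrightarrow> \<pi> (s q) = q"
    and s_one: "s \<one>\<^bsub>Q\<^esub> = \<one>\<^bsub>H\<^esub>"
  shows "(\<exists>f \<in> hom G H. f ` carrier G = carrier H) \<longleftrightarrow>
         (\<exists>\<tau> \<in> hom G Q. \<exists>\<kappa> \<in> hom G H.
            \<tau> ` carrier G = carrier Q \<and>
            (\<forall>g \<in> carrier G. \<forall>n \<in> N. \<forall>q \<in> carrier Q.
                \<kappa> g = n \<otimes>\<^bsub>H\<^esub> s q \<longrightarrow> q = \<tau> g) \<and>
            (\<forall>n \<in> N. \<exists>g \<in> kernel G Q \<tau>. \<kappa> g = n \<otimes>\<^bsub>H\<^esub> s \<one>\<^bsub>Q\<^esub>))"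
proof
  interpret H: group H by (rule H_grp)
  interpret Q: group Q by (rule Q_grp)
  have G_grp: "group G" using G_fp unfolding finitely_presented_def by blast
  interpret G: group G by (rule G_grp)
  have NH: "N \<subseteq> carrier H" using \<pi>_ker unfolding kernel_def by blast
  have Nk: "\<And>n. n \<in> N \<longleftrightarrow> n \<in> carrier H \<and> \<pi> n = \<one>\<^bsub>Q\<^esub>"
    using \<pi>_ker unfolding kernel_def by blast
  have pih: "group_hom H Q \<pi>" using \<pi>_hom by (simp add: group_hom_def group_hom_axioms_def H_grp Q_grp)
  {
    assume "\<exists>f \<in> hom G H. f ` carrier G = carrier H"
    then obtain f where fh: "f \<in> hom G H" and fs: "f ` carrier G = carrier H" by blast
    have fgh: "group_hom G H f" using fh by (simp add: group_hom_def group_hom_axioms_def H_grp G_grp)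
    have fc: "\<And>g. g \<in> carrier G \<Longrightarrow> f g \<in> carrier H" using fh by (auto simp: hom_def)
    show "\<exists>\<tau> \<in> hom G Q. \<exists>\<kappa> \<in> hom G H.
            \<tau> ` carrier G = carrier Q \<and>
            (\<forall>g \<in> carrier G. \<forall>n \<in> N. \<forall>q \<in> carrier Q.
                \<kappa> g = n \<otimes>\<^bsub>H\<^esub> s q \<longrightarrow> q = \<tau> g) \<and>
            (\<forall>n \<in> N. \<exists>g \<in> kernel G Q \<tau>. \<kappa> g = n \<otimes>\<^bsub>H\<^esub> s \<one>\<^bsub>Q\<^esub>)"
    proof (rule bexI[of _ "\<pi> \<circ> f"], rule bexI[of _ f], intro conjI ballI impI)
      show "\<pi> \<circ> f \<in> hom G Q" using fh \<pi>_hom by (rule hom_compose)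
      show "f \<in> hom G H" by (rule fh)
      show "(\<pi> \<circ> f) ` carrier G = carrier Q" unfolding image_comp[symmetric] fs \<pi>_surj by (rule refl)
      fix g n q assume g: "g \<in> carrier G" and n: "n \<in> N" and q: "q \<in> carrier Q"
        and e: "f g = n \<otimes>\<^bsub>H\<^esub> s q"
      have nH: "n \<in> carrier H" using n NH by blast
      have pn: "\<pi> n = \<one>\<^bsub>Q\<^esub>" using n Nk by blast
      have "\<pi> (f g) = \<pi> n \<otimes>\<^bsub>Q\<^esub> \<pi> (s q)" using e nH s_map q
        by (simp add: group_hom.hom_mult[OF pih] Pi_iff)
      also have "\<dots> = q" using pn s_sec q by simp
      finally show "q = (\<pi> \<circ> f) g" by simp
    next
      fix n assume n: "n \<in> N"
      have nH: "n \<in> carrier H" "\<pi> n = \<one>\<^bsub>Q\<^esub>" using n Nk by blast+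
      then have "n \<in> f ` carrier G" using fs by simp
      then obtain g where g: "g \<in> carrier G" "f g = n" by (rule imageE) simp
      have "g \<in> kernel G Q (\<pi> \<circ> f)" using g nH unfolding kernel_def by simp
      moreover have "f g = n \<otimes>\<^bsub>H\<^esub> s \<one>\<^bsub>Q\<^esub>" using g nH s_one by simp
      ultimately show "\<exists>g \<in> kernel G Q (\<pi> \<circ> f). f g = n \<otimes>\<^bsub>H\<^esub> s \<one>\<^bsub>Q\<^esub>" by blast
    qed
  }
  {
    assume "\<exists>\<tau> \<in> hom G Q. \<exists>\<kappa> \<in> hom G H.
            \<tau> ` carrier G = carrier Q \<and>
            (\<forall>g \<in> carrier G. \<forall>n \<in> N. \<forall>q \<in> carrier Q.
                \<kappa> g = n \<otimes>\<^bsub>H\<^esub> s q \<longrightarrow> q = \<tau> g) \<and>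
            (\<forall>n \<in> N. \<exists>g \<in> kernel G Q \<tau>. \<kappa> g = n \<otimes>\<^bsub>H\<^esub> s \<one>\<^bsub>Q\<^esub>)"
    then obtain \<tau> \<kappa> where th: "\<tau> \<in> hom G Q" and kh: "\<kappa> \<in> hom G H"
      and ts: "\<tau> ` carrier G = carrier Q"
      and b: "\<And>g n q. g \<in> carrier G \<Longrightarrow> n \<in> N \<Longrightarrow> q \<in> carrier Q \<Longrightarrow> \<kappa> g = n \<otimes>\<^bsub>H\<^esub> s q \<Longrightarrow> q = \<tau> g"
      and c: "\<And>n. n \<in> N \<Longrightarrow> \<exists>g \<in> kernel G Q \<tau>. \<kappa> g = n \<otimes>\<^bsub>H\<^esub> s \<one>\<^bsub>Q\<^esub>"
      by blast
    have kgh: "group_hom G H \<kappa>" using kh by (simp add: group_hom_def group_hom_axioms_def H_grp G_grp)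
    have kc: "\<And>g. g \<in> carrier G \<Longrightarrow> \<kappa> g \<in> carrier H" using kh by (auto simp: hom_def)
    have pc: "\<And>h. h \<in> carrier H \<Longrightarrow> \<pi> h \<in> carrier Q" using \<pi>_hom by (auto simp: hom_def)
    have sc: "\<And>q. q \<in> carrier Q \<Longrightarrow> s q \<in> carrier H" using s_map by auto
    have "\<kappa> ` carrier G = carrier H"
    proof
      show "\<kappa> ` carrier G \<subseteq> carrier H" using kc by auto
      show "carrier H \<subseteq> \<kappa> ` carrier G"
      proof
        fix h assume h: "h \<in> carrier H"
        define q where "q = \<pi> h"
        have q: "q \<in> carrier Q" using h pc q_def by simp
        obtain g1 where g1: "g1 \<in> carrier G" "\<tau> g1 = q" using ts q by (metis imageE)
        define q1 where "q1 = \<pi> (\<kappa> g1)"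
        have q1: "q1 \<in> carrier Q" using q1_def kc pc g1 by simp
        define n1 where "n1 = \<kappa> g1 \<otimes>\<^bsub>H\<^esub> inv\<^bsub>H\<^esub> s q1"
        have n1: "n1 \<in> N" unfolding Nk n1_def using kc g1 sc q1 s_sec
          by (simp add: group_hom.hom_mult[OF pih] group_hom.hom_inv[OF pih] q1_def pc)
        have "\<kappa> g1 = n1 \<otimes>\<^bsub>H\<^esub> s q1" unfolding n1_def using kc g1 sc q1
          by (simp add: H.m_assoc)
        hence "q1 = q" using b[OF g1(1) n1 q1] g1 by simp
        define m where "m = h \<otimes>\<^bsub>H\<^esub> inv\<^bsub>H\<^esub> \<kappa> g1"
        have m: "m \<in> N" unfolding Nk m_def using kc g1 h \<open>q1 = q\<close>
          by (simp add: group_hom.hom_mult[OF pih] group_hom.hom_inv[OF pih] q1_def q_def pc)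
        obtain g2 where g2: "g2 \<in> kernel G Q \<tau>" "\<kappa> g2 = m \<otimes>\<^bsub>H\<^esub> s \<one>\<^bsub>Q\<^esub>" using c[OF m] by blast
        have g2c: "g2 \<in> carrier G" using g2 by (simp add: kernel_def)
        have "\<kappa> (g2 \<otimes>\<^bsub>G\<^esub> g1) = h" using g2 g2c g1 kc h s_one
          by (simp add: group_hom.hom_mult[OF kgh] m_def H.m_assoc)
        thus "h \<in> \<kappa> ` carrier G" using g1 g2c by (metis G.m_closed imageI)
      qed
    qed
    thus "\<exists>f \<in> hom G H. f ` carrier G = carrier H" using kh by blast
  }
qed

end
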